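(* Let $n\ge 1$ and $s\in\{1,\dots,n\}$ be integers and let $C\in\mathbb{R}^{n\times n}$ be symmetric positive definite. Define $z^*=\max\{\log\det(C_{S,S}) : S\subseteq\{1,\dots,n\},\ |S|=s\}$. Then for every $t$ with $0\le t\le\lambda_{\min}(C)$, $$z^*=\max\Big\{\Phi_s\big(M_t(x);t\big) : x\in\{0,1\}^n,\ \textstyle\sum_{i=1}^n x_i=s\Big\}.$$
   Context: $\log$ is the natural logarithm, $C_{S,S}$ is the principal submatrix of $C$ with rows and columns indexed by $S$, and $\lambda_{\min}(C)$ is the smallest eigenvalue of $C$. For $0\le t\le\lambda_{\min}(C)$ the matrix $C-tI$ is positive semidefinite; let $A(t)\in\mathbb{R}^{n\times n}$ be a Cholesky factor of it, i.e. $C-tI=A(t)^\top A(t)$, and let $a_i(t)\in\mathbb{R}^n$ be the $i$-th column of $A(t)$. For $x\in[0,1]^n$ put $M_t(x)=\sum_{i=1}^n x_i\,a_i(t)a_i(t)^\top$. For a symmetric matrix $X$, $\lambda_1(X)\ge\dots\ge\lambda_n(X)$ are its eigenvalues. For a positive semidefinite $X$ and $t\ge 0$, $\Phi_s(X;t)=\sum_{i=1}^s\log(\lambda_i(X)+t)$. *)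

theory Defs
  imports "Jordan_Normal_Form.Matrix" "Jordan_Normal_Form.Char_Poly" "Jordan_Normal_Form.DL_Submatrix"
begin

text \<open>Real n x n matrices use the Jordan_Normal_Form type real mat; rows/columns are indexed by 0..n-1.\<close>

definition sym_mat :: "real mat \<Rightarrow> bool" where
  "sym_mat C \<longleftrightarrow> C\<^sup>T = C"

definition pos_def_mat :: "nat \<Rightarrow> real mat \<Rightarrow> bool" where
  "pos_def_mat n C \<longleftrightarrow> C \<in> carrier_mat n n \<and> sym_mat C \<and>
     (\<forall>v \<in> carrier_vec n. v \<noteq> 0\<^sub>v n \<longrightarrow> v \<bullet> (C *\<^sub>v v) > 0)"

text \<open>Eigenvalues (with algebraic multiplicity) of a real matrix whose characteristic
  polynomial splits over the reals (e.g. symmetric matrices), listed in non-increasing order: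
  eigs X ! 0 \<ge> eigs X ! 1 \<ge> ... .\<close>
definition eigs :: "real mat \<Rightarrow> real list" where
  "eigs X = (SOME xs. length xs = dim_row X \<and> sorted (rev xs) \<and>
      char_poly X = (\<Prod>a\<leftarrow>xs. [:- a, 1:]))"

definition lambda_min :: "real mat \<Rightarrow> real" where
  "lambda_min X = last (eigs X)"

definition cholesky_factor :: "nat \<Rightarrow> real mat \<Rightarrow> real mat \<Rightarrow> bool" where
  "cholesky_factor n P A \<longleftrightarrow> A \<in> carrier_mat n n \<and> upper_triangular A \<and>
     (\<forall>i<n. A $$ (i,i) \<ge> 0) \<and> P = A\<^sup>T * A"

text \<open>M_t(x) = sum_i x_i a_i a_i^T where a_i is the i-th column of A (entrywise).\<close>
definition Mmat :: "nat \<Rightarrow> real mat \<Rightarrow> real vec \<Rightarrow> real mat" where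
  "Mmat n A x = mat n n (\<lambda>(j,k). \<Sum>i<n. x $ i * (col A i $ j) * (col A i $ k))"

definition Phi :: "nat \<Rightarrow> real mat \<Rightarrow> real \<Rightarrow> real" where
  "Phi s X t = (\<Sum>i<s. ln (eigs X ! i + t))"

end

theory Submission
  imports Defs
begin

lemma prod_linear_mset:
  fixes xs ys :: "'a::idom list"
  assumes "(\<Prod>a\<leftarrow>xs. [:-a,1:]) = (\<Prod>a\<leftarrow>ys. [:-a,1:])"
  shows "mset xs = mset ys"
  using assms
proof (induction xs arbitrary: ys)
  case Nil
  show ?case
  proof (cases ys)
    case (Cons b ys')
    have "poly (\<Prod>a\<leftarrow>ys. [:-a,1:]) b = 0" using Cons by (simp add: poly_prod_list)
    with Nil show ?thesis by (simp add: poly_prod_list)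
  qed simp
next
  case (Cons a xs)
  have "poly (\<Prod>a\<leftarrow>ys. [:-a,1:]) a = 0" using Cons.prems[symmetric] by (simp add: poly_prod_list)
  hence a: "a \<in> set ys" by (auto simp: poly_prod_list prod_list_zero_iff)
  have "(\<Prod>a\<leftarrow>ys. [:-a,1:]) = [:-a,1:] * (\<Prod>a\<leftarrow>remove1 a ys. [:-a,1:])"
    using a by (rule prod_list_map_remove1)
  with Cons.prems have "[:-a,1:] * (\<Prod>a\<leftarrow>xs. [:-a,1:]) = [:-a,1:] * (\<Prod>a\<leftarrow>remove1 a ys. [:-a,1:])"
    by (metis list.map(2) prod_list.Cons)
  hence "(\<Prod>a\<leftarrow>xs. [:-a,1:]) = (\<Prod>a\<leftarrow>remove1 a ys. [:-a,1:])"
    using mult_left_cancel[of "[:-a,1:]"] by (metis pCons_eq_0_iff zero_neq_one)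
  from Cons.IH[OF this] a show ?case by simp
qed

lemma pick_bij:
  assumes "finite S" "card S = s"
  shows "bij_betw (pick S) {..<s} S"
proof -
  have inj: "inj_on (pick S) {..<s}"
    by (intro inj_onI, metis assms(2) lessThan_iff nat_neq_iff pick_mono_le)
  have "pick S ` {..<s} \<subseteq> S" using assms pick_in_set_le by auto
  moreover have "card (pick S ` {..<s}) = card S" using card_image[OF inj] assms by simp
  ultimately have "pick S ` {..<s} = S" using assms(1) by (simp add: card_subset_eq)
  with inj show ?thesis by (simp add: bij_betw_def)
qed

lemma sum_pick:
  assumes "finite S" "card S = s"
  shows "sum f S = (\<Sum>j<s. f (pick S j))"
  using sum.reindex_bij_betw[OF pick_bij[OF assms], of f] by simp


lemma sym_real_eigen_real:
  fixes M :: "real mat"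
  assumes M: "M \<in> carrier_mat n n" and sym: "M\<^sup>T = M"
  and root: "poly (char_poly (map_mat complex_of_real M)) a = 0"
  shows "Im a = 0"
proof -
  let ?Mc = "map_mat complex_of_real M"
  have Mc: "?Mc \<in> carrier_mat n n" using M by simp
  have "eigenvalue ?Mc a" using eigenvalue_root_char_poly[OF Mc] root by simp
  then obtain v where v: "v \<in> carrier_vec n" "v \<noteq> 0\<^sub>v n" "?Mc *\<^sub>v v = a \<cdot>\<^sub>v v"
    unfolding eigenvalue_def eigenvector_def using M by auto
  have symij: "M $$ (i,j) = M $$ (j,i)" if "i < n" "j < n" for i j
    using sym M that by (metis carrier_matD index_transpose_mat(1))
  have ev: "(\<Sum>j<n. of_real (M$$(i,j)) * v$j) = a * v$i" if i: "i < n" for i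
  proof -
    have "(?Mc *\<^sub>v v) $ i = (a \<cdot>\<^sub>v v) $ i" using v by simp
    moreover have "(?Mc *\<^sub>v v) $ i = (\<Sum>j<n. of_real (M$$(i,j)) * v$j)"
      using i M v(1) by (simp add: mult_mat_vec_def scalar_prod_def atLeast0LessThan)
    moreover have "(a \<cdot>\<^sub>v v) $ i = a * v$i" using i v by simp
    ultimately show ?thesis by simp
  qed
  define S where "S = (\<Sum>i<n. cnj (v$i) * (\<Sum>j<n. of_real (M$$(i,j)) * v$j))"
  define r where "r = (\<Sum>i<n. cnj (v$i) * v$i)"
  have S1: "S = a * r" unfolding S_def r_def using ev
    by (simp add: sum_distrib_left mult.commute mult.left_commute)
  have "cnj S = (\<Sum>i<n. \<Sum>j<n. v$i * of_real (M$$(i,j)) * cnj (v$j))"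
    unfolding S_def by (simp add: sum_distrib_left mult.assoc)
  also have "\<dots> = (\<Sum>j<n. \<Sum>i<n. v$i * of_real (M$$(i,j)) * cnj (v$j))"
    by (rule sum.swap)
  also have "\<dots> = S" unfolding S_def
    by (auto simp: sum_distrib_left symij mult.commute mult.left_commute intro!: sum.cong)
  finally have cS: "cnj S = S" .
  have rreal: "r = of_real (\<Sum>i<n. (cmod (v$i))^2)"
    unfolding r_def of_real_sum by (rule sum.cong[OF refl]) (metis complex_norm_square mult.commute)
  obtain i where i: "i < n" "v $ i \<noteq> 0" using v
    by (metis carrier_vecD eq_vecI index_zero_vec(1) index_zero_vec(2))
  have "(\<Sum>i<n. (cmod (v$i))^2) > 0"
  proof -
    have "(cmod (v$i))^2 > 0" using i by simp
    moreover have "(cmod (v$i))^2 \<le> (\<Sum>i<n. (cmod (v$i))^2)"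
      using i by (intro member_le_sum) auto
    ultimately show ?thesis by linarith
  qed
  hence r0: "r \<noteq> 0" using rreal by (metis less_irrefl of_real_eq_0_iff)
  have "cnj a * r = a * r" using cS S1 rreal by (simp add: complex_cnj_mult)
  hence "cnj a = a" using r0 by simp
  thus ?thesis by (metis complex_cnj_cancel_iff complex.expand complex_cnj_complex_of_real Im_complex_of_real Re_complex_of_real cnj.sel(2) neg_equal_zero)
qed

lemma sym_real_splits:
  fixes M :: "real mat"
  assumes M: "M \<in> carrier_mat n n" and sym: "M\<^sup>T = M"
  shows "\<exists>xs. length xs = n \<and> char_poly M = (\<Prod>a\<leftarrow>xs. [:-a,1:])"
proof -
  let ?Mc = "map_mat complex_of_real M"
  have Mc: "?Mc \<in> carrier_mat n n" using M by simp
  obtain as where as: "char_poly ?Mc = (\<Prod>a\<leftarrow>as. [:-a,1:])" "length as = n"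
    using char_poly_factorized[OF Mc] by blast
  have im: "Im a = 0" if "a \<in> set as" for a
  proof (rule sym_real_eigen_real[OF M sym])
    show "poly (char_poly ?Mc) a = 0" using that unfolding as(1)
      by (auto simp: poly_prod_list prod_list_zero_iff)
  qed
  define xs where "xs = map Re as"
  have asx: "as = map complex_of_real xs" unfolding xs_def using im
    by (induction as) (auto simp: complex_eq_iff)
  have hom: "char_poly ?Mc = map_poly complex_of_real (char_poly M)"
    by (rule of_real_hom.char_poly_hom[OF M])
  interpret mp: map_poly_comm_ring_hom "complex_of_real" ..
  have "map_poly complex_of_real (\<Prod>a\<leftarrow>xs. [:-a,1:]) = (\<Prod>a\<leftarrow>as. [:-a,1:])"
    unfolding asx mp.hom_prod_list by (simp add: o_def)
  hence eq: "map_poly complex_of_real (char_poly M) = map_poly complex_of_real (\<Prod>a\<leftarrow>xs. [:-a,1:])"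
    using hom as by simp
  have "char_poly M = (\<Prod>a\<leftarrow>xs. [:-a,1:])"
  proof (rule poly_eqI)
    fix k
    have "coeff (map_poly complex_of_real (char_poly M)) k = coeff (map_poly complex_of_real (\<Prod>a\<leftarrow>xs. [:-a,1:])) k"
      using eq by simp
    thus "coeff (char_poly M) k = coeff (\<Prod>a\<leftarrow>xs. [:-a,1:]) k" by (simp add: coeff_map_poly)
  qed
  moreover have "length xs = n" using as(2) xs_def by simp
  ultimately show ?thesis by blast
qed


lemma det_block_swap:
  fixes A B C D :: "'a::idom mat"
  assumes A: "A \<in> carrier_mat n n" and B: "B \<in> carrier_mat n n"
    and C: "C \<in> carrier_mat n n" and D: "D \<in> carrier_mat n n"
  shows "det (four_block_mat D C B A) = det (four_block_mat A B C D)"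
proof -
  let ?P = "four_block_mat (0\<^sub>m n n) (1\<^sub>m n) (1\<^sub>m n) (0\<^sub>m n n) :: 'a mat"
  let ?M = "four_block_mat A B C D"
  have P: "?P \<in> carrier_mat (n+n) (n+n)" by simp
  have M: "?M \<in> carrier_mat (n+n) (n+n)" using A D by simp
  have PP: "?P * ?P = 1\<^sub>m (n+n)"
    by (subst mult_four_block_mat, auto)
  have PM: "?P * ?M = four_block_mat C D A B"
    by (subst mult_four_block_mat, insert A B C D, auto)
  have PMP: "four_block_mat C D A B * ?P = four_block_mat D C B A"
    by (subst mult_four_block_mat, insert A B C D, auto)
  have "det (?P * ?P) = 1" using PP by simp
  hence dP: "det ?P * det ?P = 1" using det_mult[OF P P] by simp
  have "det (four_block_mat D C B A) = det (?P * ?M * ?P)" using PM PMP by simp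
  also have "\<dots> = det ?P * det ?M * det ?P"
    using det_mult[OF mult_carrier_mat[OF P M] P] det_mult[OF P M] by simp
  also have "\<dots> = det ?M" using dP by (simp add: algebra_simps)
  finally show ?thesis .
qed

lemma poly_char_poly_eval:
  fixes Z :: "real mat"
  assumes Z: "Z \<in> carrier_mat n n"
  shows "poly (char_poly Z) k = det (k \<cdot>\<^sub>m 1\<^sub>m n - Z)"
proof -
  have "- (char_matrix Z k) = k \<cdot>\<^sub>m 1\<^sub>m n - Z"
    by (rule eq_matI, insert Z, auto simp: char_matrix_def)
  thus ?thesis using char_poly_matrix[OF Z] by simp
qed

lemma char_poly_mult_comm:
  fixes X Y :: "real mat"
  assumes X: "X \<in> carrier_mat n n" and Y: "Y \<in> carrier_mat n n"
  shows "char_poly (X * Y) = char_poly (Y * X)"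
proof (rule poly_ext)
  fix k :: real
  let ?K = "k \<cdot>\<^sub>m 1\<^sub>m n :: real mat"
  have K: "?K \<in> carrier_mat n n" by simp
  have "poly (char_poly (X * Y)) k = det (?K - X * Y)"
    using poly_char_poly_eval[of "X*Y" n] X Y by simp
  also have "\<dots> = det (four_block_mat (1\<^sub>m n) X Y ?K)"
  proof -
    have "det (four_block_mat (1\<^sub>m n) X Y ?K) = det (1\<^sub>m n * ?K - X * Y)"
    proof (rule det_four_block_mat[OF one_carrier_mat X Y K])
      show "Y * ?K = ?K * Y"
        using mult_smult_distrib[OF Y one_carrier_mat, of k] mult_smult_assoc_mat[OF one_carrier_mat Y, of k] Y
        by simp
    qed
    thus ?thesis using K by simp
  qed
  also have "\<dots> = det (four_block_mat ?K Y X (1\<^sub>m n))"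
    by (rule det_block_swap[symmetric, OF one_carrier_mat X Y K])
  also have "\<dots> = det (?K * 1\<^sub>m n - Y * X)"
    by (rule det_four_block_mat[OF K Y X one_carrier_mat], insert X, simp)
  also have "\<dots> = poly (char_poly (Y * X)) k"
    using poly_char_poly_eval[of "Y*X" n] X Y K by simp
  finally show "poly (char_poly (X * Y)) k = poly (char_poly (Y * X)) k" .
qed


lemma char_poly_block_diag:
  fixes B D :: "'a::idom mat"
  assumes B: "B \<in> carrier_mat s s" and D: "D \<in> carrier_mat m m"
  shows "char_poly (four_block_mat B (0\<^sub>m s m) (0\<^sub>m m s) D) = char_poly B * char_poly D"
proof -
  let ?cm = "\<lambda> A. [:0, 1:] \<cdot>\<^sub>m 1\<^sub>m (dim_row A) + map_mat (\<lambda>a. [:- a:]) A"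
  have "char_poly (four_block_mat B (0\<^sub>m s m) (0\<^sub>m m s) D) = det (?cm (four_block_mat B (0\<^sub>m s m) (0\<^sub>m m s) D))"
    unfolding char_poly_defs ..
  also have "?cm (four_block_mat B (0\<^sub>m s m) (0\<^sub>m m s) D) = four_block_mat (?cm B) (0\<^sub>m s m) (0\<^sub>m m s) (?cm D)"
    by (rule eq_matI, insert B D, auto)
  also have "det \<dots> = det (?cm B) * det (?cm D)"
    by (rule det_four_block_mat_lower_left_zero, insert B D, auto)
  also have "\<dots> = char_poly B * char_poly D" unfolding char_poly_defs ..
  finally show ?thesis .
qed

lemma char_poly_zero_mat:
  "char_poly (0\<^sub>m m m :: 'a::idom mat) = [:0,1:]^m"
proof -
  have "char_poly (0\<^sub>m m m :: 'a mat) = (\<Prod>a\<leftarrow>diag_mat (0\<^sub>m m m :: 'a mat). [:- a, 1:])"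
    by (rule char_poly_upper_triangular[of _ m], auto simp: upper_triangular_def)
  also have "diag_mat (0\<^sub>m m m :: 'a mat) = replicate m 0"
    by (rule nth_equalityI, auto simp: diag_mat_def)
  finally show ?thesis by (simp add: prod_list_replicate)
qed

lemma card_S_filter:
  assumes "S \<subseteq> {0..<n}"
  shows "{i. i < n \<and> i \<in> S} = S"
  using assms by auto

lemma pick_facts:
  assumes "S \<subseteq> {0..<n}" "card S = s" "j < s"
  shows "pick S j \<in> S" "pick S j < n" "card {a\<in>S. a < pick S j} = j"
proof -
  show 1: "pick S j \<in> S" using assms pick_in_set_le by auto
  show "pick S j < n" using 1 assms(1) by auto
  show "card {a\<in>S. a < pick S j} = j" using assms card_pick_le by auto
qed

lemma sum_restrict_pick:
  assumes S: "S \<subseteq> {0..<n}" "card S = s"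
    and z: "\<And>i. i < n \<Longrightarrow> i \<notin> S \<Longrightarrow> f i = 0"
  shows "(\<Sum>i<n. f i) = (\<Sum>j<s. f (pick S j))"
proof -
  have fin: "finite S" using S(1) finite_subset by blast
  have "(\<Sum>i<n. f i) = sum f S"
    by (rule sum.mono_neutral_right, insert S z, auto)
  also have "\<dots> = (\<Sum>j<s. f (pick S j))" by (rule sum_pick[OF fin S(2)])
  finally show ?thesis .
qed

lemma quad_reindex:
  fixes X :: "real mat"
  assumes S: "S \<subseteq> {0..<n}" "card S = s"
    and X: "X \<in> carrier_mat n n" and w: "w \<in> carrier_vec s"
    and u: "u = vec n (\<lambda>i. if i \<in> S then w $ card {a\<in>S. a < i} else 0)"
  shows "w \<bullet> (submatrix X S S *\<^sub>v w) = u \<bullet> (X *\<^sub>v u)" "w \<bullet> w = u \<bullet> u"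
proof -
  have cs: "card {i. i < dim_row X \<and> i \<in> S} = s" "card {i. i < dim_col X \<and> i \<in> S} = s"
    using X S card_S_filter[OF S(1)] by auto
  have dimsub: "submatrix X S S \<in> carrier_mat s s" 
    by (rule carrier_matI, subst dim_submatrix(1), rule cs(1), subst dim_submatrix(2), rule cs(2))
  have up: "u $ pick S j = w $ j" if "j < s" for j
    using pick_facts[OF S that] unfolding u by simp
  have entry: "(submatrix X S S *\<^sub>v w) $ j = (\<Sum>k<s. X $$ (pick S j, pick S k) * w $ k)" if j: "j < s" for j
  proof -
    have "(submatrix X S S *\<^sub>v w) $ j = (\<Sum>k<s. submatrix X S S $$ (j,k) * w $ k)"
      using j dimsub w by (simp add: scalar_prod_def atLeast0LessThan)
    also have "\<dots> = (\<Sum>k<s. X $$ (pick S j, pick S k) * w $ k)"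
      by (rule sum.cong[OF refl], subst submatrix_index, insert j cs, auto)
    finally show ?thesis .
  qed
  have "w \<bullet> (submatrix X S S *\<^sub>v w) = (\<Sum>j<s. w $ j * (submatrix X S S *\<^sub>v w) $ j)"
    using dimsub by (simp add: scalar_prod_def atLeast0LessThan)
  also have "\<dots> = (\<Sum>j<s. w $ j * (\<Sum>k<s. X $$ (pick S j, pick S k) * w $ k))"
    by (rule sum.cong[OF refl], simp add: entry)
  also have "\<dots> = (\<Sum>j<s. u $ pick S j * (\<Sum>k<s. X $$ (pick S j, pick S k) * u $ pick S k))"
    by (auto simp: up intro!: sum.cong)
  also have "\<dots> = (\<Sum>i<n. u $ i * (\<Sum>i'<n. X $$ (i, i') * u $ i'))"
  proof -
    have inner: "(\<Sum>i'<n. X $$ (i, i') * u $ i') = (\<Sum>k<s. X $$ (i, pick S k) * u $ pick S k)" for i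
      by (rule sum_restrict_pick[OF S]) (simp add: u)
    show ?thesis unfolding inner
      by (rule sum_restrict_pick[OF S, of "\<lambda>i. u $ i * (\<Sum>k<s. X $$ (i, pick S k) * u $ pick S k)", symmetric]) (simp add: u)
  qed
  also have "\<dots> = u \<bullet> (X *\<^sub>v u)"
  proof -
    have ux: "u \<in> carrier_vec n" unfolding u by simp
    have "(X *\<^sub>v u) $ i = (\<Sum>i'<n. X $$ (i, i') * u $ i')" if "i < n" for i
      using that X ux by (simp add: scalar_prod_def atLeast0LessThan)
    moreover have "u \<bullet> (X *\<^sub>v u) = (\<Sum>i<n. u $ i * (X *\<^sub>v u) $ i)"
      using X by (simp add: scalar_prod_def atLeast0LessThan)
    ultimately show ?thesis by simp
  qed
  finally show "w \<bullet> (submatrix X S S *\<^sub>v w) = u \<bullet> (X *\<^sub>v u)" .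
  have "w \<bullet> w = (\<Sum>j<s. w $ j * w $ j)" using w by (simp add: scalar_prod_def atLeast0LessThan)
  also have "\<dots> = (\<Sum>j<s. u $ pick S j * u $ pick S j)" by (auto simp: up intro!: sum.cong)
  also have "\<dots> = (\<Sum>i<n. u $ i * u $ i)"
    by (rule sum_restrict_pick[OF S, of "\<lambda>i. u $ i * u $ i", symmetric]) (simp add: u)
  also have "\<dots> = u \<bullet> u" using u by (simp add: scalar_prod_def atLeast0LessThan)
  finally show "w \<bullet> w = u \<bullet> u" .
qed


lemma sub_card:
  assumes S: "S \<subseteq> {0..<n}" "card S = s" and X: "X \<in> carrier_mat n n"
  shows "card {i. i < dim_row X \<and> i \<in> S} = s" "card {i. i < dim_col X \<and> i \<in> S} = s"
  using X S card_S_filter[OF S(1)] by auto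

lemma sub_carrier:
  assumes S: "S \<subseteq> {0..<n}" "card S = s" and X: "X \<in> carrier_mat n n"
  shows "submatrix X S S \<in> carrier_mat s s"
  using sub_card[OF S X]
  by (intro carrier_matI, subst dim_submatrix(1), simp, subst dim_submatrix(2), simp)

lemma sub_idx:
  assumes S: "S \<subseteq> {0..<n}" "card S = s" and X: "X \<in> carrier_mat n n"
    and ij: "i < s" "j < s"
  shows "submatrix X S S $$ (i,j) = X $$ (pick S i, pick S j)"
  using sub_card[OF S X] ij by (intro submatrix_index) auto

lemma real_vec_pos:
  fixes v :: "real vec"
  assumes v: "v \<in> carrier_vec m" "v \<noteq> 0\<^sub>v m"
  shows "v \<bullet> v > 0"
proof -
  obtain i where i: "i < m" "v $ i \<noteq> 0" using v
    by (metis carrier_vecD eq_vecI index_zero_vec(1) index_zero_vec(2))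
  have vv: "v \<bullet> v = (\<Sum>j<m. v $ j * v $ j)" using v by (simp add: scalar_prod_def atLeast0LessThan)
  have "v $ i * v $ i > 0" using i(2) by (metis mult_neg_neg mult_pos_pos linorder_neqE_linordered_idom)
  moreover have "v $ i * v $ i \<le> (\<Sum>j<m. v $ j * v $ j)"
    using i by (intro member_le_sum) auto
  ultimately show ?thesis using vv by linarith
qed

lemma real_vec_nonneg:
  fixes v :: "real vec"
  shows "v \<bullet> v \<ge> 0"
  by (simp add: scalar_prod_def sum_nonneg)

lemma prod_shift:
  fixes t :: real
  shows "prod_list (map (\<lambda>v. - t - v) l) = (-1)^length l * prod_list (map (\<lambda>v. v + t) l)"
  by (induction l) (auto simp: algebra_simps)

lemma sum_ln_prod:
  fixes f :: "real \<Rightarrow> real"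
  assumes "\<And>x. x \<in> set l \<Longrightarrow> f x > 0"
  shows "sum_list (map (\<lambda>x. ln (f x)) l) = ln (prod_list (map f l))"
  using assms
proof (induction l)
  case (Cons a l)
  have pos: "(\<forall>x\<in>set l'. f x > 0) \<Longrightarrow> prod_list (map f l') > 0" for l'
    by (induction l') auto
  have p1: "prod_list (map f l) > 0" using Cons.prems by (intro pos) auto
  have p2: "f a > 0" using Cons.prems by simp
  have h: "f a \<noteq> 0" "prod_list (map f l) \<noteq> 0" using p1 p2 by (metis less_irrefl)+
  have "ln (f a * prod_list (map f l)) = (if f a \<noteq> 0 \<and> prod_list (map f l) \<noteq> 0 then ln (f a) + ln (prod_list (map f l)) else 0)"
    by (rule ln_mult)
  with h have "ln (f a * prod_list (map f l)) = ln (f a) + ln (prod_list (map f l))" by simp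
  moreover have "sum_list (map (\<lambda>x. ln (f x)) l) = ln (prod_list (map f l))"
    using Cons.IH Cons.prems by simp
  ultimately show ?case by simp
qed simp

lemma prod_list_map_perm:
  fixes f :: "'a \<Rightarrow> 'b::comm_monoid_mult"
  assumes "mset xs = mset ys"
  shows "prod_list (map f xs) = prod_list (map f ys)"
proof -
  have "prod_list (map f xs) = prod_mset (image_mset f (mset xs))"
    by (simp flip: prod_mset_prod_list)
  also have "\<dots> = prod_list (map f ys)" unfolding assms by (simp flip: prod_mset_prod_list)
  finally show ?thesis .
qed

lemma sum_list_map_perm:
  fixes f :: "'a \<Rightarrow> 'b::comm_monoid_add"
  assumes "mset xs = mset ys"
  shows "sum_list (map f xs) = sum_list (map f ys)"
proof -
  have "sum_list (map f xs) = sum_mset (image_mset f (mset xs))"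
    by (simp flip: sum_mset_sum_list)
  also have "\<dots> = sum_list (map f ys)" unfolding assms by (simp flip: sum_mset_sum_list)
  finally show ?thesis .
qed

lemma sorted_mset_eq:
  assumes "mset xs = mset ys" "sorted xs" "sorted ys"
  shows "xs = ys"
  by (metis assms properties_for_sort)


lemma main_S:
  fixes C A :: "real mat" and t :: real
  assumes pd: "pos_def_mat n C" and chol: "cholesky_factor n (C - t \<cdot>\<^sub>m 1\<^sub>m n) A"
    and S: "S \<subseteq> {0..<n}" "card S = s"
  shows "Phi s (Mmat n A (vec n (\<lambda>i. if i \<in> S then 1 else 0))) t = ln (det (submatrix C S S))"
proof -
  have C: "C \<in> carrier_mat n n" and symC: "C\<^sup>T = C"
    and pdq: "\<And>v. v \<in> carrier_vec n \<Longrightarrow> v \<noteq> 0\<^sub>v n \<Longrightarrow> v \<bullet> (C *\<^sub>v v) > 0"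
    using pd unfolding pos_def_mat_def sym_mat_def by auto
  define K where "K = C - t \<cdot>\<^sub>m 1\<^sub>m n"
  have A: "A \<in> carrier_mat n n" and KA: "K = A\<^sup>T * A"
    using chol unfolding cholesky_factor_def K_def by auto
  have K: "K \<in> carrier_mat n n" unfolding K_def by (intro minus_carrier_mat) simp
  have Kij: "K $$ (i,j) = C $$ (i,j) - (if i = j then t else 0)" if "i < n" "j < n" for i j
    unfolding K_def using C that by simp
  have fin: "finite S" using S(1) finite_subset by blast
  have sn: "s \<le> n" using card_mono[OF _ S(1)] S(2) by simp
  define KS where "KS = submatrix K S S"
  define CS where "CS = submatrix C S S"
  have KS: "KS \<in> carrier_mat s s" unfolding KS_def by (rule sub_carrier[OF S K])
  have CS: "CS \<in> carrier_mat s s" unfolding CS_def by (rule sub_carrier[OF S C])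
  note pf = pick_facts[OF S]
  have pinj: "pick S i = pick S j \<longleftrightarrow> i = j" if "i < s" "j < s" for i j
    using pick_mono_le[of i S j] pick_mono_le[of j S i] that S(2) by (metis nat_neq_iff)
  define x where "x = vec n (\<lambda>i. if i \<in> S then 1 else (0::real))"
  define M where "M = Mmat n A x"
  define N where "N = mat n n (\<lambda>(a,j). if j < s then A $$ (a, pick S j) else (0::real))"
  have N: "N \<in> carrier_mat n n" unfolding N_def by simp
  have NT: "N\<^sup>T \<in> carrier_mat n n" using N by simp
  have M: "M \<in> carrier_mat n n" unfolding M_def Mmat_def by simp
  have MN: "M = N * N\<^sup>T"
  proof (rule eq_matI)
    fix j k assume jk: "j < dim_row (N * N\<^sup>T)" "k < dim_col (N * N\<^sup>T)"
    hence j: "j < n" and k: "k < n" using N by auto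
    have "M $$ (j,k) = (\<Sum>i<n. x $ i * A $$ (j,i) * A $$ (k,i))"
      unfolding M_def Mmat_def using j k A by (simp add: col_def)
    also have "\<dots> = (\<Sum>l<s. x $ pick S l * A $$ (j,pick S l) * A $$ (k,pick S l))"
      by (rule sum_restrict_pick[OF S], simp add: x_def)
    also have "\<dots> = (\<Sum>l<s. A $$ (j,pick S l) * A $$ (k,pick S l))"
      by (rule sum.cong[OF refl], insert pf, simp add: x_def)
    also have "\<dots> = (\<Sum>l<n. if l < s then A $$ (j,pick S l) * A $$ (k,pick S l) else 0)"
    proof -
      have "{l\<in>{..<n}. l < s} = {..<s}" using sn by auto
      thus ?thesis using sum.inter_filter[of "{..<n}" "\<lambda>l. A $$ (j,pick S l) * A $$ (k,pick S l)" "\<lambda>l. l < s"]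
        by simp
    qed
    also have "\<dots> = (N * N\<^sup>T) $$ (j,k)"
      using j k N by (auto simp: N_def scalar_prod_def atLeast0LessThan intro!: sum.cong)
    finally show "M $$ (j,k) = (N * N\<^sup>T) $$ (j,k)" .
  qed (insert M N, auto)
  have NTN: "N\<^sup>T * N = four_block_mat KS (0\<^sub>m s (n-s)) (0\<^sub>m (n-s) s) (0\<^sub>m (n-s) (n-s))"
  proof (rule eq_matI)
    fix i j assume ij: "i < dim_row (four_block_mat KS (0\<^sub>m s (n-s)) (0\<^sub>m (n-s) s) (0\<^sub>m (n-s) (n-s)))"
        "j < dim_col (four_block_mat KS (0\<^sub>m s (n-s)) (0\<^sub>m (n-s) s) (0\<^sub>m (n-s) (n-s)))"
    hence i: "i < n" and j: "j < n" using KS sn by auto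
    have e: "(N\<^sup>T * N) $$ (i,j) = (\<Sum>a<n. N $$ (a,i) * N $$ (a,j))"
      using i j N by (simp add: scalar_prod_def atLeast0LessThan)
    show "(N\<^sup>T * N) $$ (i,j) = four_block_mat KS (0\<^sub>m s (n-s)) (0\<^sub>m (n-s) s) (0\<^sub>m (n-s) (n-s)) $$ (i,j)"
    proof (cases "i < s \<and> j < s")
      case True
      have "(N\<^sup>T * N) $$ (i,j) = (\<Sum>a<n. A $$ (a, pick S i) * A $$ (a, pick S j))"
        unfolding e using True i j by (auto simp: N_def intro!: sum.cong)
      also have "\<dots> = (A\<^sup>T * A) $$ (pick S i, pick S j)"
        using A pf True by (simp add: scalar_prod_def atLeast0LessThan)
      also have "\<dots> = KS $$ (i,j)" unfolding KS_def KA[symmetric]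
        using sub_idx[OF S K] True by simp
      finally show ?thesis using True KS sn by simp
    next
      case False
      have "(N\<^sup>T * N) $$ (i,j) = 0"
        unfolding e using False i j by (auto simp: N_def intro!: sum.neutral)
      thus ?thesis using False KS sn i j by auto
    qed
  qed (insert KS N sn, auto)
  have cpM: "char_poly M = char_poly KS * [:0,1:]^(n-s)"
  proof -
    have "char_poly M = char_poly (N\<^sup>T * N)" unfolding MN by (rule char_poly_mult_comm[OF N NT])
    also have "\<dots> = char_poly KS * char_poly (0\<^sub>m (n-s) (n-s) :: real mat)"
      unfolding NTN by (rule char_poly_block_diag[OF KS], simp)
    finally show ?thesis by (simp add: char_poly_zero_mat)
  qed
  have symKS: "KS\<^sup>T = KS"
  proof (rule eq_matI)
    fix i j assume "i < dim_row KS" "j < dim_col KS"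
    hence ij: "i < s" "j < s" using KS by auto
    have "C $$ (pick S i, pick S j) = C $$ (pick S j, pick S i)"
      using symC C pf ij by (metis carrier_matD index_transpose_mat(1))
    thus "KS\<^sup>T $$ (i, j) = KS $$ (i, j)"
      using ij KS unfolding KS_def using sub_idx[OF S K] Kij pf pinj by auto
  qed (insert KS, auto)
  obtain vs where vs: "length vs = s" "char_poly KS = (\<Prod>a\<leftarrow>vs. [:-a,1:])"
    using sym_real_splits[OF KS symKS] by blast
  have evprop: "v \<ge> 0 \<and> v + t > 0" if v: "v \<in> set vs" for v
  proof -
    have "poly (char_poly KS) v = 0" using v unfolding vs(2)
      by (auto simp: poly_prod_list prod_list_zero_iff)
    hence "eigenvalue KS v" using eigenvalue_root_char_poly[OF KS] by simp
    then obtain w where w: "w \<in> carrier_vec s" "w \<noteq> 0\<^sub>v s" "KS *\<^sub>v w = v \<cdot>\<^sub>v w"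
      unfolding eigenvalue_def eigenvector_def using KS by auto
    define u where "u = vec n (\<lambda>i. if i \<in> S then w $ card {a\<in>S. a < i} else 0)"
    have u: "u \<in> carrier_vec n" unfolding u_def by simp
    have qK: "w \<bullet> (KS *\<^sub>v w) = u \<bullet> (K *\<^sub>v u)" unfolding KS_def
      by (rule quad_reindex(1)[OF S K w(1) u_def])
    have ww: "w \<bullet> w = u \<bullet> u" by (rule quad_reindex(2)[OF S K w(1) u_def])
    have wpos: "w \<bullet> w > 0" by (rule real_vec_pos[OF w(1,2)])
    have u0: "u \<noteq> 0\<^sub>v n" using ww wpos u by auto
    have lhs: "w \<bullet> (KS *\<^sub>v w) = v * (w \<bullet> w)" using w by simp
    have "u \<bullet> (K *\<^sub>v u) = (A *\<^sub>v u) \<bullet> (A *\<^sub>v u)"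
    proof -
      have "u \<bullet> (K *\<^sub>v u) = u \<bullet> (A\<^sup>T *\<^sub>v (A *\<^sub>v u))" unfolding KA using A u by simp
      also have "\<dots> = (A\<^sup>T *\<^sub>v (A *\<^sub>v u)) \<bullet> u" using A u by (simp add: comm_scalar_prod[of _ n])
      also have "\<dots> = (A *\<^sub>v u) \<bullet> (A *\<^sub>v u)" using transpose_vec_mult_scalar[OF A u, of "A *\<^sub>v u"] A u by simp
      finally show ?thesis .
    qed
    hence Kpos: "u \<bullet> (K *\<^sub>v u) \<ge> 0" using real_vec_nonneg by simp
    have "u \<bullet> (K *\<^sub>v u) = u \<bullet> (C *\<^sub>v u) - t * (u \<bullet> u)"
    proof -
      have tu: "(t \<cdot>\<^sub>m 1\<^sub>m n) *\<^sub>v u = t \<cdot>\<^sub>v u"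
      proof (rule eq_vecI)
        fix i assume "i < dim_vec (t \<cdot>\<^sub>v u)"
        hence i: "i < n" using u by simp
        have "((t \<cdot>\<^sub>m 1\<^sub>m n) *\<^sub>v u) $ i = (\<Sum>j<n. (if i = j then t else 0) * u $ j)"
          using i u by (auto simp: scalar_prod_def atLeast0LessThan intro!: sum.cong)
        also have "\<dots> = (\<Sum>j<n. if i = j then t * u $ j else 0)" by (rule sum.cong) auto
        also have "\<dots> = t * u $ i" using i by simp
        finally show "((t \<cdot>\<^sub>m 1\<^sub>m n) *\<^sub>v u) $ i = (t \<cdot>\<^sub>v u) $ i" using i u by simp
      qed (insert u, simp)
      have "K *\<^sub>v u = C *\<^sub>v u - (t \<cdot>\<^sub>m 1\<^sub>m n) *\<^sub>v u" unfolding K_def using C u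
        by (simp add: minus_mult_distrib_mat_vec)
      hence "K *\<^sub>v u = C *\<^sub>v u - t \<cdot>\<^sub>v u" using tu by simp
      thus ?thesis using C u by (simp add: scalar_prod_minus_distrib[of _ n])
    qed
    moreover have "u \<bullet> (C *\<^sub>v u) > 0" by (rule pdq[OF u u0])
    ultimately have "(v + t) * (w \<bullet> w) > 0" using qK lhs ww by (simp add: algebra_simps)
    hence "v + t > 0" using wpos by (simp add: zero_less_mult_iff)
    moreover have "v * (w \<bullet> w) \<ge> 0" using Kpos qK lhs by simp
    hence "v \<ge> 0" using wpos by (simp add: zero_le_mult_iff)
    ultimately show ?thesis by simp
  qed
  define ys where "ys = rev (sort vs) @ replicate (n-s) (0::real)"
  let ?P = "\<lambda>xs. length xs = dim_row M \<and> sorted (rev xs) \<and> char_poly M = (\<Prod>a\<leftarrow>xs. [:- a, 1:])"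
  have Pys: "?P ys"
  proof (intro conjI)
    show "length ys = dim_row M" using M vs sn unfolding ys_def by simp
    show "sorted (rev ys)" unfolding ys_def using evprop
      by (auto simp: sorted_append)
    have "(\<Prod>a\<leftarrow>rev (sort vs). [:- a, 1:]) = (\<Prod>a\<leftarrow>vs. [:- a, 1:])"
      by (rule prod_list_map_perm) simp
    thus "char_poly M = (\<Prod>a\<leftarrow>ys. [:- a, 1:])" unfolding ys_def cpM vs(2)
      by (simp add: prod_list_replicate)
  qed
  have eigsM: "eigs M = ys"
  proof -
    have Pe: "?P (eigs M)" unfolding eigs_def by (rule someI[of ?P, OF Pys])
    have "mset (eigs M) = mset ys" using Pe Pys by (intro prod_linear_mset) simp
    hence "mset (rev (eigs M)) = mset (rev ys)" by simp
    hence "rev (eigs M) = rev ys" using Pe Pys by (intro sorted_mset_eq) auto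
    thus ?thesis by simp
  qed
  have "Phi s M t = (\<Sum>i<s. ln (rev (sort vs) ! i + t))"
    unfolding Phi_def eigsM ys_def using vs by (auto simp: nth_append intro!: sum.cong)
  also have "\<dots> = sum_list (map (\<lambda>v. ln (v + t)) (rev (sort vs)))"
    using vs by (simp add: sum_list_sum_nth atLeast0LessThan)
  also have "\<dots> = sum_list (map (\<lambda>v. ln (v + t)) vs)"
    by (rule sum_list_map_perm) simp
  also have "\<dots> = ln (prod_list (map (\<lambda>v. v + t) vs))"
    by (rule sum_ln_prod, insert evprop, auto)
  also have "prod_list (map (\<lambda>v. v + t) vs) = det CS"
  proof -
    have "poly (char_poly KS) (-t) = det ((-t) \<cdot>\<^sub>m 1\<^sub>m s - KS)" by (rule poly_char_poly_eval[OF KS])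
    also have "(-t) \<cdot>\<^sub>m 1\<^sub>m s - KS = (-1) \<cdot>\<^sub>m CS"
    proof (rule eq_matI)
      fix i j assume "i < dim_row ((-1) \<cdot>\<^sub>m CS)" "j < dim_col ((-1) \<cdot>\<^sub>m CS)"
      hence ij: "i < s" "j < s" using CS by auto
      show "((-t) \<cdot>\<^sub>m 1\<^sub>m s - KS) $$ (i,j) = ((-1) \<cdot>\<^sub>m CS) $$ (i,j)"
        using ij KS CS unfolding KS_def CS_def using sub_idx[OF S K] sub_idx[OF S C] Kij pf pinj by auto
    qed (insert KS CS, auto)
    also have "det ((-1) \<cdot>\<^sub>m CS) = (-1)^s * det CS" using CS by simp
    finally have a: "poly (char_poly KS) (-t) = (-1)^s * det CS" .
    have "poly (char_poly KS) (-t) = prod_list (map (\<lambda>v. - t - v) vs)"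
      unfolding vs(2) poly_prod_list by (simp add: o_def) (intro arg_cong[where f = prod_list] map_cong, auto)
    also have "\<dots> = (-1)^s * prod_list (map (\<lambda>v. v + t) vs)" using prod_shift vs(1) by simp
    finally show ?thesis using a by simp
  qed
  finally show ?thesis unfolding M_def x_def CS_def .
qed


lemma indicator_sum:
  fixes n :: nat and S :: "nat set"
  assumes "S \<subseteq> {0..<n}"
  shows "(\<Sum>i<n. (if i \<in> S then 1 else 0) :: real) = real (card S)"
proof -
  have "(\<Sum>i<n. (if i \<in> S then 1 else 0) :: real) = (\<Sum>i\<in>{i\<in>{..<n}. i \<in> S}. 1)"
    using sum.inter_filter[of "{..<n}" "\<lambda>_. 1::real" "\<lambda>i. i \<in> S"] by simp
  also have "{i\<in>{..<n}. i \<in> S} = S" using assms by auto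
  finally show ?thesis by simp
qed

theorem proposition1:
  fixes n s :: nat and C A :: "real mat" and t :: real
  assumes "n \<ge> 1" and "1 \<le> s" and "s \<le> n"
    and "pos_def_mat n C"
    and "0 \<le> t" and "t \<le> lambda_min C"
    and "cholesky_factor n (C - t \<cdot>\<^sub>m 1\<^sub>m n) A"
  shows "Max {ln (det (submatrix C S S)) | S. S \<subseteq> {0..<n} \<and> card S = s}
       = Max {Phi s (Mmat n A x) t | x. x \<in> carrier_vec n \<and> (\<forall>i<n. x $ i \<in> {0, 1})
                                         \<and> (\<Sum>i<n. x $ i) = s}"
proof -
  have "{ln (det (submatrix C S S)) | S. S \<subseteq> {0..<n} \<and> card S = s}
       = {Phi s (Mmat n A x) t | x. x \<in> carrier_vec n \<and> (\<forall>i<n. x $ i \<in> {0, 1})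
                                         \<and> (\<Sum>i<n. x $ i) = s}" (is "?L = ?R")
  proof (rule Set.set_eqI, rule iffI)
    fix z assume "z \<in> ?L"
    then obtain S where S: "S \<subseteq> {0..<n}" "card S = s" and z: "z = ln (det (submatrix C S S))" by blast
    define x where "x = vec n (\<lambda>i. if i \<in> S then 1 else (0::real))"
    have "z = Phi s (Mmat n A x) t" unfolding z x_def
      by (rule main_S[OF assms(4) assms(7) S, symmetric])
    moreover have "x \<in> carrier_vec n" "\<forall>i<n. x $ i \<in> {0, 1}" unfolding x_def by auto
    moreover have "(\<Sum>i<n. x $ i) = s"
    proof -
      have "(\<Sum>i<n. x $ i) = (\<Sum>i<n. (if i \<in> S then 1 else 0) :: real)"
        unfolding x_def by (rule sum.cong) auto
      thus ?thesis using indicator_sum[OF S(1)] S(2) by simp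
    qed
    ultimately show "z \<in> ?R" by blast
  next
    fix z assume "z \<in> ?R"
    then obtain x where x: "x \<in> carrier_vec n" "\<forall>i<n. x $ i \<in> {0, 1}" "(\<Sum>i<n. x $ i) = s"
      and z: "z = Phi s (Mmat n A x) t" by blast
    define S where "S = {i. i < n \<and> x $ i = 1}"
    have S1: "S \<subseteq> {0..<n}" unfolding S_def by auto
    have xS: "x = vec n (\<lambda>i. if i \<in> S then 1 else (0::real))"
    proof (rule eq_vecI)
      fix i assume "i < dim_vec (vec n (\<lambda>i. if i \<in> S then 1 else (0::real)))"
      hence i: "i < n" by simp
      show "x $ i = vec n (\<lambda>i. if i \<in> S then 1 else (0::real)) $ i"
        using x(2) i unfolding S_def by auto
    qed (insert x(1), simp)
    have "(\<Sum>i<n. x $ i) = (\<Sum>i<n. (if i \<in> S then 1 else 0) :: real)"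
      by (subst xS, rule sum.cong) auto
    hence "real (card S) = real s" using indicator_sum[OF S1] x(3) by simp
    hence S2: "card S = s" by simp
    have "z = ln (det (submatrix C S S))" unfolding z xS
      by (rule main_S[OF assms(4) assms(7) S1 S2])
    thus "z \<in> ?L" using S1 S2 by blast
  qed
  thus ?thesis by simp
qed

end
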